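(* Let $\mu,\nu$ be atomless, compactly supported probability measures on $\mathbb{R}$. A transport plan $\gamma\in\Pi(\mu,\nu)$ is optimal for the problem $\min_{\gamma\in\Pi(\mu,\nu)}\int|y-x|\,d\gamma(x,y)$ if and only if, for $\gamma$-a.e. $(x,y)\in\mathbb{R}^2$: (a) if $x\in A$, then $y=x$; (b) if $x\in A^+$, then $y\ge x$ and $y$ belongs to the same connected component of $A^+$ as $x$; (c) if $x\in A^-$, then $y\le x$ and $y$ belongs to the same connected component of $A^-$ as $x$.
   Context: $F_\rho(x)=\rho((-\infty,x])$ is the cumulative distribution function. $A=\{x: F_\mu(x)=F_\nu(x)\}$ (closed), $A^+=\{x: F_\mu(x)>F_\nu(x)\}$ and $A^-=\{x:F_\mu(x)<F_\nu(x)\}$ (open). $\Pi(\mu,\nu)$ is the set of probability measures on $\mathbb{R}^2$ with first marginal $\mu$ and second marginal $\nu$. *)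

theory Defs
  imports "HOL-Probability.Probability"
begin

definition borel_prob :: "real measure \<Rightarrow> bool" where
  "borel_prob \<rho> \<longleftrightarrow> prob_space \<rho> \<and> sets \<rho> = sets borel"

definition atomless :: "real measure \<Rightarrow> bool" where
  "atomless \<rho> \<longleftrightarrow> (\<forall>x. emeasure \<rho> {x} = 0)"

definition compactly_supported :: "real measure \<Rightarrow> bool" where
  "compactly_supported \<rho> \<longleftrightarrow> (\<exists>K. compact K \<and> emeasure \<rho> (UNIV - K) = 0)"

definition transport_plans :: "real measure \<Rightarrow> real measure \<Rightarrow> (real \<times> real) measure set" where
  "transport_plans \<mu> \<nu> = {\<gamma>. prob_space \<gamma> \<and> sets \<gamma> = sets (borel \<Otimes>\<^sub>M borel)
       \<and> distr \<gamma> borel fst = \<mu> \<and> distr \<gamma> borel snd = \<nu>}"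

definition transport_cost :: "(real \<times> real) measure \<Rightarrow> ennreal" where
  "transport_cost \<gamma> = (\<integral>\<^sup>+ p. ennreal \<bar>snd p - fst p\<bar> \<partial>\<gamma>)"

definition optimal_plan :: "real measure \<Rightarrow> real measure \<Rightarrow> (real \<times> real) measure \<Rightarrow> bool" where
  "optimal_plan \<mu> \<nu> \<gamma> \<longleftrightarrow> \<gamma> \<in> transport_plans \<mu> \<nu> \<and>
     (\<forall>\<gamma>'\<in>transport_plans \<mu> \<nu>. transport_cost \<gamma> \<le> transport_cost \<gamma>')"

definition eqset :: "real measure \<Rightarrow> real measure \<Rightarrow> real set" where
  "eqset \<mu> \<nu> = {x. cdf \<mu> x = cdf \<nu> x}"
definition posset :: "real measure \<Rightarrow> real measure \<Rightarrow> real set" where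
  "posset \<mu> \<nu> = {x. cdf \<mu> x > cdf \<nu> x}"
definition negset :: "real measure \<Rightarrow> real measure \<Rightarrow> real set" where
  "negset \<mu> \<nu> = {x. cdf \<mu> x < cdf \<nu> x}"

end

theory Submission
  imports Defs
begin

locale plan =
  fixes \<mu> \<nu> :: "real measure" and \<gamma> :: "(real \<times> real) measure"
  assumes bpm: "borel_prob \<mu>" and bpn: "borel_prob \<nu>" and pl: "\<gamma> \<in> transport_plans \<mu> \<nu>"
begin

lemma sets_g[measurable_cong]: "sets \<gamma> = sets (borel \<Otimes>\<^sub>M borel)"
  using pl by (simp add: transport_plans_def)
lemma mu_eq: "distr \<gamma> borel fst = \<mu>" using pl by (simp add: transport_plans_def)
lemma nu_eq: "distr \<gamma> borel snd = \<nu>" using pl by (simp add: transport_plans_def)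

sublocale G: prob_space \<gamma> using pl by (simp add: transport_plans_def)

lemma space_g[simp]: "space \<gamma> = UNIV"
  using sets_eq_imp_space_eq[OF sets_g] by (simp add: space_pair_measure)

sublocale M: real_distribution \<mu> using bpm by (simp add: borel_prob_def real_distribution_def real_distribution_axioms_def)
sublocale N: real_distribution \<nu> using bpn by (simp add: borel_prob_def real_distribution_def real_distribution_axioms_def)

lemma setsI: "Measurable.pred \<gamma> P \<Longrightarrow> {p. P p} \<in> sets \<gamma>"
  unfolding Measurable.pred_def by simp

definition U where "U t = measure \<gamma> {p. fst p \<le> t \<and> t < snd p}"
definition D where "D t = measure \<gamma> {p. snd p \<le> t \<and> t < fst p}"
definition dF where "dF t = cdf \<mu> t - cdf \<nu> t"

lemma cdf_mu: "cdf \<mu> t = measure \<gamma> {p. fst p \<le> t}"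
proof -
  have "cdf \<mu> t = measure (distr \<gamma> borel fst) {..t}" by (simp add: cdf_def mu_eq)
  also have "\<dots> = measure \<gamma> (fst -` {..t} \<inter> space \<gamma>)"
    by (rule measure_distr) auto
  finally show ?thesis by (simp add: vimage_def)
qed

lemma cdf_nu: "cdf \<nu> t = measure \<gamma> {p. snd p \<le> t}"
proof -
  have "cdf \<nu> t = measure (distr \<gamma> borel snd) {..t}" by (simp add: cdf_def nu_eq)
  also have "\<dots> = measure \<gamma> (snd -` {..t} \<inter> space \<gamma>)"
    by (rule measure_distr) auto
  finally show ?thesis by (simp add: vimage_def)
qed

lemma dF_eq: "dF t = U t - D t"
proof -
  have a: "measure \<gamma> {p. fst p \<le> t} = measure \<gamma> {p. fst p \<le> t \<and> snd p \<le> t} + U t"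
    unfolding U_def
    by (subst G.finite_measure_Union[symmetric]) (auto intro!: arg_cong[where f="measure \<gamma>"] setsI)
  have b: "measure \<gamma> {p. snd p \<le> t} = measure \<gamma> {p. fst p \<le> t \<and> snd p \<le> t} + D t"
    unfolding D_def
    by (subst G.finite_measure_Union[symmetric]) (auto intro!: arg_cong[where f="measure \<gamma>"] setsI)
  show ?thesis unfolding dF_def cdf_mu cdf_nu a b by simp
qed

end

context plan begin

lemma sets_lg: "sets (lborel \<Otimes>\<^sub>M \<gamma>) = sets (borel \<Otimes>\<^sub>M (borel \<Otimes>\<^sub>M borel))"
  by (rule sets_pair_measure_cong) (simp_all add: sets_g)

lemma tonelli:
  fixes Q :: "(real \<times> real \<times> real) set"
  assumes "Q \<in> sets (borel \<Otimes>\<^sub>M (borel \<Otimes>\<^sub>M borel))"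
  shows "(\<integral>\<^sup>+ t. emeasure \<gamma> (Pair t -` Q) \<partial>lborel) = (\<integral>\<^sup>+ p. emeasure lborel ((\<lambda>t. (t,p)) -` Q) \<partial>\<gamma>)"
proof -
  interpret P: pair_sigma_finite lborel \<gamma> by standard
  have Q: "Q \<in> sets (lborel \<Otimes>\<^sub>M \<gamma>)" using assms sets_lg by simp
  show ?thesis
    using G.emeasure_pair_measure_alt[OF Q] P.emeasure_pair_measure_alt2[OF Q] by simp
qed

lemma meas_emPair:
  fixes Q :: "(real \<times> real \<times> real) set"
  assumes "Q \<in> sets (borel \<Otimes>\<^sub>M (borel \<Otimes>\<^sub>M borel))"
  shows "(\<lambda>t. emeasure \<gamma> (Pair t -` Q)) \<in> borel_measurable borel"
proof -
  have Q: "Q \<in> sets (lborel \<Otimes>\<^sub>M \<gamma>)" using assms sets_lg by simp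
  show ?thesis using G.measurable_emeasure_Pair[OF Q]
    using measurable_cong_sets[OF sets_lborel refl, where N=borel] by simp
qed

definition QU where "QU = {z::real\<times>real\<times>real. fst (snd z) \<le> fst z \<and> fst z < snd (snd z)}"
definition QD where "QD = {z::real\<times>real\<times>real. snd (snd z) \<le> fst z \<and> fst z < fst (snd z)}"

lemma QU_sets: "QU \<in> sets (borel \<Otimes>\<^sub>M (borel \<Otimes>\<^sub>M borel))"
proof -
  have "QU = {z \<in> space (borel \<Otimes>\<^sub>M (borel \<Otimes>\<^sub>M borel)). fst (snd z) \<le> fst z \<and> fst z < snd (snd z)}"
    by (simp add: QU_def space_pair_measure)
  also have "\<dots> \<in> sets (borel \<Otimes>\<^sub>M (borel \<Otimes>\<^sub>M borel))" by measurable
  finally show ?thesis .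
qed
lemma QD_sets: "QD \<in> sets (borel \<Otimes>\<^sub>M (borel \<Otimes>\<^sub>M borel))"
proof -
  have "QD = {z \<in> space (borel \<Otimes>\<^sub>M (borel \<Otimes>\<^sub>M borel)). snd (snd z) \<le> fst z \<and> fst z < fst (snd z)}"
    by (simp add: QD_def space_pair_measure)
  also have "\<dots> \<in> sets (borel \<Otimes>\<^sub>M (borel \<Otimes>\<^sub>M borel))" by measurable
  finally show ?thesis .
qed

lemma U_em: "emeasure \<gamma> (Pair t -` QU) = ennreal (U t)"
  unfolding U_def QU_def by (simp add: G.emeasure_eq_measure vimage_def)
lemma D_em: "emeasure \<gamma> (Pair t -` QD) = ennreal (D t)"
  unfolding D_def QD_def by (simp add: G.emeasure_eq_measure vimage_def)

lemma QU_vim: "Pair t -` QU \<in> sets \<gamma>"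
proof -
  have "Pair t -` QU = {p. fst p \<le> t \<and> t < snd p}" by (auto simp: QU_def)
  also have "\<dots> \<in> sets \<gamma>" by (rule setsI) measurable
  finally show ?thesis .
qed
lemma QD_vim: "Pair t -` QD \<in> sets \<gamma>"
proof -
  have "Pair t -` QD = {p. snd p \<le> t \<and> t < fst p}" by (auto simp: QD_def)
  also have "\<dots> \<in> sets \<gamma>" by (rule setsI) measurable
  finally show ?thesis .
qed
lemma QUD: "Pair t -` QU \<inter> Pair t -` QD = {}" by (auto simp: QU_def QD_def)

lemma U_nonneg: "U t \<ge> 0" by (simp add: U_def)
lemma D_nonneg: "D t \<ge> 0" by (simp add: D_def)

lemma U_meas[measurable]: "U \<in> borel_measurable borel"
proof -
  have "(\<lambda>t. enn2real (emeasure \<gamma> (Pair t -` QU))) \<in> borel_measurable borel"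
    using meas_emPair[OF QU_sets] by measurable
  then show ?thesis by (simp add: U_em U_nonneg)
qed
lemma D_meas[measurable]: "D \<in> borel_measurable borel"
proof -
  have "(\<lambda>t. enn2real (emeasure \<gamma> (Pair t -` QD))) \<in> borel_measurable borel"
    using meas_emPair[OF QD_sets] by measurable
  then show ?thesis by (simp add: D_em D_nonneg)
qed

lemma cost_eq: "transport_cost \<gamma> = (\<integral>\<^sup>+ t. ennreal (U t + D t) \<partial>lborel)"
proof -
  have S: "QU \<union> QD \<in> sets (borel \<Otimes>\<^sub>M (borel \<Otimes>\<^sub>M borel))" using QU_sets QD_sets by auto
  have "(\<integral>\<^sup>+ t. ennreal (U t + D t) \<partial>lborel) = (\<integral>\<^sup>+ t. emeasure \<gamma> (Pair t -` (QU \<union> QD)) \<partial>lborel)"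
  proof (intro nn_integral_cong)
    fix t
    have e: "Pair t -` (QU \<union> QD) = Pair t -` QU \<union> Pair t -` QD" by auto
    have "emeasure \<gamma> (Pair t -` (QU \<union> QD)) = emeasure \<gamma> (Pair t -` QU) + emeasure \<gamma> (Pair t -` QD)"
      unfolding e by (rule plus_emeasure[symmetric]) (use QU_vim QD_vim QUD in auto)
    then show "ennreal (U t + D t) = emeasure \<gamma> (Pair t -` (QU \<union> QD))"
      by (simp add: U_em D_em U_nonneg D_nonneg ennreal_plus)
  qed
  also have "\<dots> = (\<integral>\<^sup>+ p. emeasure lborel ((\<lambda>t. (t,p)) -` (QU \<union> QD)) \<partial>\<gamma>)"
    by (rule tonelli[OF S])
  also have "\<dots> = (\<integral>\<^sup>+ p. ennreal \<bar>snd p - fst p\<bar> \<partial>\<gamma>)"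
  proof (intro nn_integral_cong)
    fix p :: "real \<times> real"
    obtain a b where p: "p = (a,b)" by (cases p)
    have "(\<lambda>t. (t,p)) -` (QU \<union> QD) = {a..<b} \<union> {b..<a}"
      by (auto simp: QU_def QD_def p)
    moreover have "emeasure lborel ({a..<b} \<union> {b..<a}) = ennreal \<bar>b - a\<bar>"
      by (cases "a \<le> b") auto
    ultimately show "emeasure lborel ((\<lambda>t. (t,p)) -` (QU \<union> QD)) = ennreal \<bar>snd p - fst p\<bar>"
      by (simp add: p)
  qed
  finally show ?thesis by (simp add: transport_cost_def)
qed

end

context plan begin

lemma dF_meas[measurable]: "dF \<in> borel_measurable borel"
proof -
  have "cdf \<mu> \<in> borel_measurable borel" by (rule borel_measurable_mono) (simp add: mono_def M.cdf_nondecreasing)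
  moreover have "cdf \<nu> \<in> borel_measurable borel" by (rule borel_measurable_mono) (simp add: mono_def N.cdf_nondecreasing)
  ultimately show ?thesis unfolding dF_def[abs_def] by measurable
qed

lemma cost_ge: "(\<integral>\<^sup>+ t. ennreal \<bar>dF t\<bar> \<partial>lborel) \<le> transport_cost \<gamma>"
  unfolding cost_eq
proof (intro nn_integral_mono ennreal_leI)
  fix t show "\<bar>dF t\<bar> \<le> U t + D t" using U_nonneg[of t] D_nonneg[of t] by (simp add: dF_eq abs_if)
qed

lemma cost_eq_if: assumes "\<And>t. U t = 0 \<or> D t = 0"
  shows "transport_cost \<gamma> = (\<integral>\<^sup>+ t. ennreal \<bar>dF t\<bar> \<partial>lborel)"
  unfolding cost_eq
proof (intro nn_integral_cong arg_cong[where f=ennreal])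
  fix t show "U t + D t = \<bar>dF t\<bar>" using assms[of t] U_nonneg[of t] D_nonneg[of t] by (auto simp: dF_eq abs_if)
qed

lemma cost_split: "transport_cost \<gamma> = (\<integral>\<^sup>+ t. ennreal \<bar>dF t\<bar> \<partial>lborel) + (\<integral>\<^sup>+ t. ennreal (U t + D t - \<bar>dF t\<bar>) \<partial>lborel)"
proof -
  have "transport_cost \<gamma> = (\<integral>\<^sup>+ t. ennreal \<bar>dF t\<bar> + ennreal (U t + D t - \<bar>dF t\<bar>) \<partial>lborel)"
    unfolding cost_eq
  proof (intro nn_integral_cong)
    fix t show "ennreal (U t + D t) = ennreal \<bar>dF t\<bar> + ennreal (U t + D t - \<bar>dF t\<bar>)"
      using U_nonneg[of t] D_nonneg[of t] by (subst ennreal_plus[symmetric]) (auto simp: dF_eq abs_if)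
  qed
  also have "\<dots> = (\<integral>\<^sup>+ t. ennreal \<bar>dF t\<bar> \<partial>lborel) + (\<integral>\<^sup>+ t. ennreal (U t + D t - \<bar>dF t\<bar>) \<partial>lborel)"
    by (rule nn_integral_add) measurable
  finally show ?thesis .
qed

lemma ex_in_pos:
  assumes "AE p in \<gamma>. P p" "S \<in> sets \<gamma>" "emeasure \<gamma> S \<noteq> 0"
  shows "\<exists>p\<in>S. P p"
proof (rule ccontr)
  assume "\<not> ?thesis"
  then have "AE p in \<gamma>. p \<notin> S" using assms(1) by (auto elim: eventually_mono)
  then have "emeasure \<gamma> S = 0" using AE_iff_measurable[OF assms(2), of "\<lambda>p. p \<notin> S"] by simp
  then show False using assms(3) by simp
qed

lemma gstep:
  fixes X Y :: "real \<times> real \<Rightarrow> real" and K :: "real set"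
  assumes [measurable]: "X \<in> borel_measurable (borel \<Otimes>\<^sub>M borel)" "Y \<in> borel_measurable (borel \<Otimes>\<^sub>M borel)"
    and [measurable]: "K \<in> sets borel"
    and ae: "AE t in lborel. t \<in> K \<longrightarrow> emeasure \<gamma> {p. X p \<le> t \<and> t < Y p} = 0"
  shows "AE p in \<gamma>. emeasure lborel {t. X p \<le> t \<and> t < Y p \<and> t \<in> K} = 0"
proof -
  define Q where "Q = {z::real\<times>real\<times>real. X (snd z) \<le> fst z \<and> fst z < Y (snd z) \<and> fst z \<in> K}"
  have Qs: "Q \<in> sets (borel \<Otimes>\<^sub>M (borel \<Otimes>\<^sub>M borel))"
  proof -
    have "Q = {z \<in> space (borel \<Otimes>\<^sub>M (borel \<Otimes>\<^sub>M borel)). X (snd z) \<le> fst z \<and> fst z < Y (snd z) \<and> fst z \<in> K}"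
      by (simp add: Q_def space_pair_measure)
    also have "\<dots> \<in> sets (borel \<Otimes>\<^sub>M (borel \<Otimes>\<^sub>M borel))" by measurable
    finally show ?thesis .
  qed
  have ae0: "AE t in lborel. emeasure \<gamma> (Pair t -` Q) = 0"
      using ae
    proof (rule eventually_mono)
      fix t assume h: "t \<in> K \<longrightarrow> emeasure \<gamma> {p. X p \<le> t \<and> t < Y p} = 0"
      show "emeasure \<gamma> (Pair t -` Q) = 0"
      proof (cases "t \<in> K")
        case True
        have "Pair t -` Q = {p. X p \<le> t \<and> t < Y p}" using True by (auto simp: Q_def)
        then show ?thesis using h True by simp
      next
        case False
        then have "Pair t -` Q = {}" by (auto simp: Q_def)
        then show ?thesis by simp
      qed
    qed
  have mQ: "(\<lambda>t. emeasure \<gamma> (Pair t -` Q)) \<in> borel_measurable lborel"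
    using meas_emPair[OF Qs] measurable_cong_sets[OF sets_lborel refl, where N=borel] by simp
  have "(\<integral>\<^sup>+ t. emeasure \<gamma> (Pair t -` Q) \<partial>lborel) = 0"
    using nn_integral_0_iff_AE[OF mQ] ae0 by simp
  then have "(\<integral>\<^sup>+ p. emeasure lborel ((\<lambda>t. (t,p)) -` Q) \<partial>\<gamma>) = 0"
    using tonelli[OF Qs] by simp
  moreover have "(\<lambda>p. emeasure lborel ((\<lambda>t. (t,p)) -` Q)) \<in> borel_measurable \<gamma>"
  proof -
    interpret P: pair_sigma_finite lborel \<gamma> by standard
    show ?thesis using P.measurable_emeasure_Pair2[of Q] Qs sets_lg by simp
  qed
  ultimately have "AE p in \<gamma>. emeasure lborel ((\<lambda>t. (t,p)) -` Q) = 0"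
    using nn_integral_0_iff_AE by blast
  moreover have "\<And>p. (\<lambda>t. (t,p)) -` Q = {t. X p \<le> t \<and> t < Y p \<and> t \<in> K}" by (auto simp: Q_def)
  ultimately show ?thesis by simp
qed

end

context plan begin

lemma U_em2: "emeasure \<gamma> {p. fst p \<le> t \<and> t < snd p} = ennreal (U t)"
  unfolding U_def by (simp add: G.emeasure_eq_measure)
lemma D_em2: "emeasure \<gamma> {p. snd p \<le> t \<and> t < fst p} = ennreal (D t)"
  unfolding D_def by (simp add: G.emeasure_eq_measure)

lemma everywhere:
  assumes ae: "AE t in lborel. U t = 0 \<or> D t = 0"
  shows "U t = 0 \<or> D t = 0"
proof -
  have ae1: "AE t in lborel. t \<in> {t. dF t \<le> 0} \<longrightarrow> emeasure \<gamma> {p. fst p \<le> t \<and> t < snd p} = 0"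
    using ae
  proof (rule eventually_mono)
    fix t assume "U t = 0 \<or> D t = 0"
    then show "t \<in> {t. dF t \<le> 0} \<longrightarrow> emeasure \<gamma> {p. fst p \<le> t \<and> t < snd p} = 0"
      using U_nonneg[of t] D_nonneg[of t] by (auto simp: U_em2 dF_eq)
  qed
  have ae2: "AE t in lborel. t \<in> {t. dF t \<ge> 0} \<longrightarrow> emeasure \<gamma> {p. snd p \<le> t \<and> t < fst p} = 0"
    using ae
  proof (rule eventually_mono)
    fix t assume "U t = 0 \<or> D t = 0"
    then show "t \<in> {t. dF t \<ge> 0} \<longrightarrow> emeasure \<gamma> {p. snd p \<le> t \<and> t < fst p} = 0"
      using U_nonneg[of t] D_nonneg[of t] by (auto simp: D_em2 dF_eq)
  qed
  have K1: "{t. dF t \<le> 0} \<in> sets borel" by measurable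
  have K2: "{t. dF t \<ge> 0} \<in> sets borel" by measurable
  have g1: "AE p in \<gamma>. emeasure lborel {s. fst p \<le> s \<and> s < snd p \<and> s \<in> {t. dF t \<le> 0}} = 0"
    by (rule gstep[OF _ _ K1 ae1]) measurable
  have g2: "AE p in \<gamma>. emeasure lborel {s. snd p \<le> s \<and> s < fst p \<and> s \<in> {t. dF t \<ge> 0}} = 0"
    by (rule gstep[OF _ _ K2 ae2]) measurable
  show ?thesis
  proof (rule ccontr)
    assume "\<not> ?thesis"
    then have u: "U t > 0" and d: "D t > 0" using U_nonneg[of t] D_nonneg[of t] by auto
    have s1: "{p. fst p \<le> t \<and> t < snd p} \<in> sets \<gamma>" by (rule setsI) measurable
    have s2: "{p. snd p \<le> t \<and> t < fst p} \<in> sets \<gamma>" by (rule setsI) measurable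
    obtain p1 where p1: "fst p1 \<le> t" "t < snd p1"
      and e1: "emeasure lborel {s. fst p1 \<le> s \<and> s < snd p1 \<and> s \<in> {t. dF t \<le> 0}} = 0"
      using ex_in_pos[OF g1 s1] u by (auto simp: U_em2)
    obtain p2 where p2: "snd p2 \<le> t" "t < fst p2"
      and e2: "emeasure lborel {s. snd p2 \<le> s \<and> s < fst p2 \<and> s \<in> {t. dF t \<ge> 0}} = 0"
      using ex_in_pos[OF g2 s2] d by (auto simp: D_em2)
    define m where "m = min (snd p1) (fst p2)"
    have tm: "t < m" using p1 p2 by (simp add: m_def)
    let ?S1 = "{s. fst p1 \<le> s \<and> s < snd p1 \<and> s \<in> {t. dF t \<le> 0}}"
    let ?S2 = "{s. snd p2 \<le> s \<and> s < fst p2 \<and> s \<in> {t. dF t \<ge> 0}}"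
    have S1: "?S1 \<in> sets lborel" by measurable
    have S2: "?S2 \<in> sets lborel" by measurable
    have sub: "{t<..<m} \<subseteq> ?S1 \<union> ?S2" using p1 p2 by (auto simp: m_def)
    have "ennreal (m - t) = emeasure lborel {t<..<m}" using tm by simp
    also have "\<dots> \<le> emeasure lborel (?S1 \<union> ?S2)" by (rule emeasure_mono[OF sub]) (use S1 S2 in auto)
    also have "\<dots> \<le> emeasure lborel ?S1 + emeasure lborel ?S2" by (rule emeasure_subadditive[OF S1 S2])
    also have "\<dots> = 0" using e1 e2 by simp
    finally show False using tm by simp
  qed
qed

lemma pstep:
  fixes X Y :: "real \<times> real \<Rightarrow> real" and h :: "real \<Rightarrow> real"
  assumes [measurable]: "X \<in> borel_measurable (borel \<Otimes>\<^sub>M borel)" "Y \<in> borel_measurable (borel \<Otimes>\<^sub>M borel)"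
    and cont: "continuous_on UNIV h"
    and z: "\<And>t. h t \<le> 0 \<Longrightarrow> emeasure \<gamma> {p. X p \<le> t \<and> t < Y p} = 0"
    and at: "\<And>t. emeasure \<gamma> {p. Y p = t} = 0"
  shows "AE p in \<gamma>. X p < Y p \<longrightarrow> (\<forall>t\<in>{X p..Y p}. h t > 0)"
proof -
  define K where "K = {t. h t \<le> 0}"
  have Kc: "closed K" unfolding K_def using closed_Collect_le[OF cont continuous_on_const] .
  define N where "N = (\<lambda>(r,s). Sup (K \<inter> {r..s})) ` (\<rat> \<times> \<rat>) \<union> (\<lambda>(r,s). Inf (K \<inter> {r..s})) ` (\<rat> \<times> \<rat>)"
  have cQ: "countable (\<rat> \<times> (\<rat>::real set))" by (intro countable_SIGMA countable_rat)
  have cN: "countable (N \<inter> K)" unfolding N_def using cQ by auto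
  define B where "B n = {p. X p < Y p \<and> X p \<le> n \<and> n \<le> Y p}" for n
  have null: "B n \<in> null_sets \<gamma>" if "n \<in> N \<inter> K" for n
  proof -
    have hn: "h n \<le> 0" using that by (simp add: K_def)
    have a: "{p. X p \<le> n \<and> n < Y p} \<in> null_sets \<gamma>"
      using z[OF hn] by (auto simp: null_sets_def intro!: setsI)
    have b: "{p. Y p = n} \<in> null_sets \<gamma>"
      using at[of n] by (auto simp: null_sets_def intro!: setsI)
    have "B n \<in> sets \<gamma>" unfolding B_def by (rule setsI) measurable
    moreover have "B n \<subseteq> {p. X p \<le> n \<and> n < Y p} \<union> {p. Y p = n}" by (auto simp: B_def)
    moreover have c: "{p. X p \<le> n \<and> n < Y p} \<union> {p. Y p = n} \<in> null_sets \<gamma>" using null_sets.Un[OF a b] .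
    moreover note emeasure_mono[OF calculation(2) null_setsD2[OF c]]
    ultimately have "emeasure \<gamma> (B n) \<le> 0"
      using null_setsD1[OF c] by simp
    then show ?thesis using \<open>B n \<in> sets \<gamma>\<close> by auto
  qed
  have U0: "(\<Union>n\<in>N \<inter> K. B n) \<in> null_sets \<gamma>" by (rule null_sets_UN'[OF cN null])
  show ?thesis
  proof (rule AE_I'[OF U0], rule subsetI)
    fix p assume "p \<in> {p \<in> space \<gamma>. \<not> (X p < Y p \<longrightarrow> (\<forall>t\<in>{X p..Y p}. 0 < h t))}"
    then obtain t where xy: "X p < Y p" and t: "t \<in> {X p..Y p}" and ht: "\<not> 0 < h t" by auto
    have tK: "t \<in> K" using ht by (simp add: K_def)
    have "\<exists>n\<in>N \<inter> K. X p \<le> n \<and> n \<le> Y p"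
    proof (cases "t < Y p")
      case True
      obtain r where r: "r \<in> \<rat>" "t - 1 < r" "r < t" using Rats_dense_in_real[of "t-1" t] by auto
      obtain s where s: "s \<in> \<rat>" "t < s" "s < Y p" using Rats_dense_in_real[OF True] by auto
      let ?S = "K \<inter> {r..s}"
      have ne: "t \<in> ?S" using tK r s by auto
      have bdd: "bdd_above ?S" by (rule bdd_aboveI[of _ s]) auto
      have cS: "closed ?S" using Kc by (intro closed_Int) auto
      have inS: "Sup ?S \<in> ?S" using closed_contains_Sup[OF _ bdd cS] ne by blast
      have ge: "t \<le> Sup ?S" using cSup_upper[OF ne bdd] .
      have "Sup ?S \<in> N" unfolding N_def using r(1) s(1) by force
      then show ?thesis using inS ge t s by (intro bexI[of _ "Sup ?S"]) auto
    next
      case False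
      then have ty: "t = Y p" using t by auto
      obtain r where r: "r \<in> \<rat>" "X p < r" "r < Y p" using Rats_dense_in_real[OF xy] by auto
      obtain s where s: "s \<in> \<rat>" "Y p < s" "s < Y p + 1" using Rats_dense_in_real[of "Y p" "Y p + 1"] by auto
      let ?S = "K \<inter> {r..s}"
      have ne: "t \<in> ?S" using tK r s ty by auto
      have bdd: "bdd_below ?S" by (rule bdd_belowI[of _ r]) auto
      have cS: "closed ?S" using Kc by (intro closed_Int) auto
      have inS: "Inf ?S \<in> ?S" using closed_contains_Inf[OF _ bdd cS] ne by blast
      have le: "Inf ?S \<le> t" using cInf_lower[OF ne bdd] .
      have "Inf ?S \<in> N" unfolding N_def using r(1) s(1) by force
      then show ?thesis using inS le ty r by (intro bexI[of _ "Inf ?S"]) auto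
    qed
    then show "p \<in> (\<Union>n\<in>N \<inter> K. B n)" using xy by (auto simp: B_def)
  qed
qed

end

lemma quantile_plan:
  assumes bm: "borel_prob \<mu>" and bn: "borel_prob \<nu>"
  shows "\<exists>\<gamma>0\<in>transport_plans \<mu> \<nu>. \<forall>t. measure \<gamma>0 {p. fst p \<le> t \<and> t < snd p} = 0 \<or>
                                         measure \<gamma>0 {p. snd p \<le> t \<and> t < fst p} = 0"
proof -
  interpret M: cdf_distribution \<mu> using bm
    by (simp add: borel_prob_def cdf_distribution_def real_distribution_def real_distribution_axioms_def)
  interpret N: cdf_distribution \<nu> using bn
    by (simp add: borel_prob_def cdf_distribution_def real_distribution_def real_distribution_axioms_def)
  define \<Omega> where "\<Omega> = restrict_space lborel {0<..<1::real}"
  interpret O: prob_space \<Omega>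
    by (auto simp add: \<Omega>_def emeasure_restrict_space space_restrict_space intro!: prob_spaceI)
  have sO: "sets \<Omega> = sets (restrict_space borel {0<..<1::real})"
    unfolding \<Omega>_def by (rule sets_restrict_space_cong) simp
  have m1: "M.I \<in> borel_measurable \<Omega>" by (subst measurable_cong_sets[OF sO refl]) (rule M.measurable_CI)
  have m2: "N.I \<in> borel_measurable \<Omega>" by (subst measurable_cong_sets[OF sO refl]) (rule N.measurable_CI)
  define f where "f = (\<lambda>\<omega>. (M.I \<omega>, N.I \<omega>))"
  have mf: "f \<in> measurable \<Omega> (borel \<Otimes>\<^sub>M borel)" unfolding f_def using m1 m2 by (rule measurable_Pair)
  define \<gamma>0 where "\<gamma>0 = distr \<Omega> (borel \<Otimes>\<^sub>M borel) f"
  have pl: "\<gamma>0 \<in> transport_plans \<mu> \<nu>"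
    unfolding transport_plans_def
  proof (intro CollectI conjI)
    show "prob_space \<gamma>0" unfolding \<gamma>0_def by (rule O.prob_space_distr[OF mf])
    show "sets \<gamma>0 = sets (borel \<Otimes>\<^sub>M borel)" by (simp add: \<gamma>0_def)
    have "distr \<gamma>0 borel fst = distr \<Omega> borel (fst \<circ> f)"
      unfolding \<gamma>0_def by (rule distr_distr[OF _ mf]) simp
    also have "\<dots> = distr \<Omega> borel M.I" by (simp add: f_def o_def)
    also have "\<dots> = \<mu>" unfolding \<Omega>_def by (rule M.distr_I_eq_M)
    finally show "distr \<gamma>0 borel fst = \<mu>" .
    have "distr \<gamma>0 borel snd = distr \<Omega> borel (snd \<circ> f)"
      unfolding \<gamma>0_def by (rule distr_distr[OF _ mf]) simp
    also have "\<dots> = distr \<Omega> borel N.I" by (simp add: f_def o_def)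
    also have "\<dots> = \<nu>" unfolding \<Omega>_def by (rule N.distr_I_eq_M)
    finally show "distr \<gamma>0 borel snd = \<nu>" .
  qed
  have spO: "space \<Omega> = {0<..<1}" by (simp add: \<Omega>_def space_restrict_space)
  have meq: "measure \<gamma>0 {p. P p} = measure \<Omega> {\<omega> \<in> space \<Omega>. P (f \<omega>)}"
    if "{p. P p} \<in> sets (borel \<Otimes>\<^sub>M borel)" for P
    unfolding \<gamma>0_def using measure_distr[OF mf that] by (simp add: vimage_def Int_def conj_commute)
  have "\<forall>t. measure \<gamma>0 {p. fst p \<le> t \<and> t < snd p} = 0 \<or> measure \<gamma>0 {p. snd p \<le> t \<and> t < fst p} = 0"
  proof
    fix t
    have s1: "{p::real\<times>real. fst p \<le> t \<and> t < snd p} \<in> sets (borel \<Otimes>\<^sub>M borel)"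
    proof -
      have "{p. fst p \<le> t \<and> t < snd p} = {..t} \<times> {t<..}" by auto
      also have "\<dots> \<in> sets (borel \<Otimes>\<^sub>M borel)" by (rule pair_measureI) (simp_all add: atMost_borel greaterThan_borel)
      finally show ?thesis .
    qed
    have s2: "{p::real\<times>real. snd p \<le> t \<and> t < fst p} \<in> sets (borel \<Otimes>\<^sub>M borel)"
    proof -
      have "{p. snd p \<le> t \<and> t < fst p} = {t<..} \<times> {..t}" by auto
      also have "\<dots> \<in> sets (borel \<Otimes>\<^sub>M borel)" by (rule pair_measureI) (simp_all add: atMost_borel greaterThan_borel)
      finally show ?thesis .
    qed
    have p1: "M.I \<omega> \<le> t \<longleftrightarrow> \<omega> \<le> cdf \<mu> t" if "0 < \<omega>" "\<omega> < 1" for \<omega>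
      using M.pseudoinverse[OF that, of t] by blast
    have p2: "N.I \<omega> \<le> t \<longleftrightarrow> \<omega> \<le> cdf \<nu> t" if "0 < \<omega>" "\<omega> < 1" for \<omega>
      using N.pseudoinverse[OF that, of t] by blast
    have e1: "{\<omega> \<in> space \<Omega>. fst (f \<omega>) \<le> t \<and> t < snd (f \<omega>)} = {\<omega>\<in>{0<..<1}. \<omega> \<le> cdf \<mu> t \<and> \<not> \<omega> \<le> cdf \<nu> t}"
      unfolding spO f_def by (auto simp: p1 p2 not_le[symmetric])
    have e2: "{\<omega> \<in> space \<Omega>. snd (f \<omega>) \<le> t \<and> t < fst (f \<omega>)} = {\<omega>\<in>{0<..<1}. \<omega> \<le> cdf \<nu> t \<and> \<not> \<omega> \<le> cdf \<mu> t}"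
      unfolding spO f_def by (auto simp: p1 p2 not_le[symmetric])
    show "measure \<gamma>0 {p. fst p \<le> t \<and> t < snd p} = 0 \<or> measure \<gamma>0 {p. snd p \<le> t \<and> t < fst p} = 0"
    proof (cases "cdf \<mu> t \<le> cdf \<nu> t")
      case True
      then have "{\<omega>\<in>{0<..<1}. \<omega> \<le> cdf \<mu> t \<and> \<not> \<omega> \<le> cdf \<nu> t} = {}" by auto
      then have "measure \<gamma>0 {p. fst p \<le> t \<and> t < snd p} = 0" by (simp only: meq[OF s1] e1 measure_empty)
      then show ?thesis by blast
    next
      case False
      then have "{\<omega>\<in>{0<..<1}. \<omega> \<le> cdf \<nu> t \<and> \<not> \<omega> \<le> cdf \<mu> t} = {}" by auto
      then have "measure \<gamma>0 {p. snd p \<le> t \<and> t < fst p} = 0" by (simp only: meq[OF s2] e2 measure_empty)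
      then show ?thesis by blast
    qed
  qed
  then show ?thesis using pl by blast
qed

lemma pw1:
  fixes F G :: "real \<Rightarrow> real"
  assumes h1: "x < y \<longrightarrow> (\<forall>t\<in>{x..y}. F t - G t > 0)"
    and h2: "y < x \<longrightarrow> (\<forall>t\<in>{y..x}. - (F t - G t) > 0)"
  shows "(x \<in> {t. F t = G t} \<longrightarrow> y = x) \<and>
       (x \<in> {t. F t > G t} \<longrightarrow> y \<ge> x \<and> y \<in> connected_component_set {t. F t > G t} x) \<and>
       (x \<in> {t. F t < G t} \<longrightarrow> y \<le> x \<and> y \<in> connected_component_set {t. F t < G t} x)"
proof (intro conjI impI)
  assume "x \<in> {t. F t = G t}"
  then have e: "F x - G x = 0" by simp
  show "y = x"
  proof (rule ccontr)
    assume "y \<noteq> x"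
    then consider "x < y" | "y < x" by linarith
    then show False
    proof cases
      case 1 then have "F x - G x > 0" using h1 by auto
      then show False using e by simp
    next
      case 2 then have "- (F x - G x) > 0" using h2 by auto
      then show False using e by simp
    qed
  qed
next
  assume a: "x \<in> {t. F t > G t}"
  show xy: "y \<ge> x"
  proof (rule ccontr)
    assume "\<not> y \<ge> x" then have "y < x" by simp
    then have "- (F x - G x) > 0" using h2 by auto
    then show False using a by simp
  qed
  have sub: "{x..y} \<subseteq> {t. F t > G t}"
  proof (cases "x = y")
    case True then show ?thesis using a by auto
  next
    case False then have "x < y" using xy by auto
    then show ?thesis using h1 by auto
  qed
  have "{x..y} \<subseteq> connected_component_set {t. F t > G t} x"
    by (rule connected_component_maximal) (use xy sub in auto)
  then show "y \<in> connected_component_set {t. F t > G t} x" using xy by auto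
next
  assume a: "x \<in> {t. F t < G t}"
  show yx: "y \<le> x"
  proof (rule ccontr)
    assume "\<not> y \<le> x" then have "x < y" by simp
    then have "F x - G x > 0" using h1 by auto
    then show False using a by simp
  qed
  have sub: "{y..x} \<subseteq> {t. F t < G t}"
  proof (cases "x = y")
    case True then show ?thesis using a by auto
  next
    case False then have "y < x" using yx by auto
    then show ?thesis using h2 by auto
  qed
  have "{y..x} \<subseteq> connected_component_set {t. F t < G t} x"
    by (rule connected_component_maximal) (use yx sub in auto)
  then show "y \<in> connected_component_set {t. F t < G t} x" using yx by auto
qed

lemma cc_between:
  fixes S :: "real set"
  assumes "x \<in> S" "y \<in> connected_component_set S x" "x \<le> t" "t \<le> y"
  shows "t \<in> S"
proof -
  have "is_interval (connected_component_set S x)"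
    using is_interval_connected_1 connected_connected_component by blast
  moreover have "x \<in> connected_component_set S x" using assms(1) by (simp add: connected_component_refl)
  ultimately have "t \<in> connected_component_set S x" using assms(2-4) unfolding is_interval_1 by blast
  then show ?thesis using connected_component_subset by blast
qed

lemma cc_between2:
  fixes S :: "real set"
  assumes "x \<in> S" "y \<in> connected_component_set S x" "y \<le> t" "t \<le> x"
  shows "t \<in> S"
proof -
  have "is_interval (connected_component_set S x)"
    using is_interval_connected_1 connected_connected_component by blast
  moreover have "x \<in> connected_component_set S x" using assms(1) by (simp add: connected_component_refl)
  ultimately have "t \<in> connected_component_set S x" using assms(2-4) unfolding is_interval_1 by blast
  then show ?thesis using connected_component_subset by blast
qed

lemma pw2:
  fixes F G :: "real \<Rightarrow> real"
  assumes c: "(x \<in> {t. F t = G t} \<longrightarrow> y = x) \<and>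
       (x \<in> {t. F t > G t} \<longrightarrow> y \<ge> x \<and> y \<in> connected_component_set {t. F t > G t} x) \<and>
       (x \<in> {t. F t < G t} \<longrightarrow> y \<le> x \<and> y \<in> connected_component_set {t. F t < G t} x)"
  shows "x \<le> t \<and> t < y \<longrightarrow> F t > G t" and "y \<le> t \<and> t < x \<longrightarrow> F t < G t"
proof -
  show "x \<le> t \<and> t < y \<longrightarrow> F t > G t"
  proof
  assume a: "x \<le> t \<and> t < y"
  have "F x > G x"
  proof -
    consider "F x = G x" | "F x > G x" | "F x < G x" by linarith
    then show ?thesis using c a by cases auto
  qed
  then show "F t > G t" using cc_between[of x "{t. F t > G t}" y t] c a by auto
  qed
  show "y \<le> t \<and> t < x \<longrightarrow> F t < G t"
  proof
  assume a: "y \<le> t \<and> t < x"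
  have "F x < G x"
  proof -
    consider "F x = G x" | "F x > G x" | "F x < G x" by linarith
    then show ?thesis using c a by cases auto
  qed
  then show "F t < G t" using cc_between2[of x "{t. F t < G t}" y t] c a by auto
  qed
qed

lemma cs_bound:
  assumes "borel_prob M" "compactly_supported M"
  shows "\<exists>R. \<forall>t. (t < -R \<longrightarrow> cdf M t = 0) \<and> (R \<le> t \<longrightarrow> cdf M t = 1)"
proof -
  interpret real_distribution M using assms(1)
    by (simp add: borel_prob_def real_distribution_def real_distribution_axioms_def)
  obtain K where K: "compact K" "emeasure M (UNIV - K) = 0"
    using assms(2) by (auto simp: compactly_supported_def)
  obtain R where R: "\<forall>x\<in>K. \<bar>x\<bar> \<le> R" using compact_imp_bounded[OF K(1)] by (auto simp: bounded_iff)
  have Ks: "UNIV - K \<in> sets M" using compact_imp_closed[OF K(1)] by (simp add: borel_open open_Diff)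
  have null: "measure M (UNIV - K) = 0" using K(2) by (simp add: measure_def)
  have "\<forall>t. (t < -R \<longrightarrow> cdf M t = 0) \<and> (R \<le> t \<longrightarrow> cdf M t = 1)"
  proof (intro allI conjI impI)
    fix t assume t: "t < -R"
    have "{..t} \<subseteq> UNIV - K" using R t by force
    then have "measure M {..t} \<le> measure M (UNIV - K)" by (rule finite_measure_mono[OF _ Ks])
    then show "cdf M t = 0" using null measure_nonneg[of M "{..t}"] by (simp add: cdf_def)
  next
    fix t assume t: "R \<le> t"
    have "{t<..} \<subseteq> UNIV - K" using R t by force
    then have "measure M {t<..} \<le> measure M (UNIV - K)" by (rule finite_measure_mono[OF _ Ks])
    then have z: "measure M {t<..} = 0" using null by (simp add: measure_nonneg antisym)
    have "measure M (space M - {t<..}) = 1 - measure M {t<..}" by (rule prob_compl) simp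
    moreover have "space M - {t<..} = {..t}" by auto
    ultimately show "cdf M t = 1" using z by (simp add: cdf_def)
  qed
  then show ?thesis by blast
qed

theorem mainTheorem4:
  fixes \<mu> \<nu> :: "real measure" and \<gamma> :: "(real \<times> real) measure"
  assumes "borel_prob \<mu>" and "borel_prob \<nu>"
    and "atomless \<mu>" and "atomless \<nu>"
    and "compactly_supported \<mu>" and "compactly_supported \<nu>"
    and "\<gamma> \<in> transport_plans \<mu> \<nu>"
  shows "optimal_plan \<mu> \<nu> \<gamma> \<longleftrightarrow>
    (AE p in \<gamma>.
       (fst p \<in> eqset \<mu> \<nu> \<longrightarrow> snd p = fst p) \<and>
       (fst p \<in> posset \<mu> \<nu> \<longrightarrow> snd p \<ge> fst p \<and>
          snd p \<in> connected_component_set (posset \<mu> \<nu>) (fst p)) \<and>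
       (fst p \<in> negset \<mu> \<nu> \<longrightarrow> snd p \<le> fst p \<and>
          snd p \<in> connected_component_set (negset \<mu> \<nu>) (fst p)))"
    (is "_ \<longleftrightarrow> (AE p in \<gamma>. ?C p)")
proof -
  interpret plan \<mu> \<nu> \<gamma> using assms by unfold_locales
  have dFe: "\<And>t. dF t = cdf \<mu> t - cdf \<nu> t" by (simp add: dF_def)
  have sets_eq: "eqset \<mu> \<nu> = {t. cdf \<mu> t = cdf \<nu> t}" "posset \<mu> \<nu> = {t. cdf \<mu> t > cdf \<nu> t}"
      "negset \<mu> \<nu> = {t. cdf \<mu> t < cdf \<nu> t}" by (simp_all add: eqset_def posset_def negset_def)
  have s1: "\<And>t. {p. fst p \<le> t \<and> t < snd p} \<in> sets \<gamma>" by (rule setsI) measurable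
  have s2: "\<And>t. {p. snd p \<le> t \<and> t < fst p} \<in> sets \<gamma>" by (rule setsI) measurable
  show ?thesis
  proof
    assume opt: "optimal_plan \<mu> \<nu> \<gamma>"
    obtain \<gamma>0 where g0: "\<gamma>0 \<in> transport_plans \<mu> \<nu>"
      and g0p: "\<forall>t. measure \<gamma>0 {p. fst p \<le> t \<and> t < snd p} = 0 \<or> measure \<gamma>0 {p. snd p \<le> t \<and> t < fst p} = 0"
      using quantile_plan[OF assms(1,2)] by blast
    interpret P0: plan \<mu> \<nu> \<gamma>0 using assms(1,2) g0 by unfold_locales
    have ud0: "\<And>t. P0.U t = 0 \<or> P0.D t = 0" using g0p by (simp add: P0.U_def P0.D_def)
    have c0: "transport_cost \<gamma>0 = (\<integral>\<^sup>+ t. ennreal \<bar>dF t\<bar> \<partial>lborel)"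
      using P0.cost_eq_if[OF ud0] by (simp add: P0.dF_def dF_def)
    have le: "transport_cost \<gamma> \<le> transport_cost \<gamma>0" using opt g0 by (auto simp: optimal_plan_def)
    obtain R1 where R1: "\<forall>t. (t < -R1 \<longrightarrow> cdf \<mu> t = 0) \<and> (R1 \<le> t \<longrightarrow> cdf \<mu> t = 1)"
      using cs_bound[OF assms(1,5)] by blast
    obtain R2 where R2: "\<forall>t. (t < -R2 \<longrightarrow> cdf \<nu> t = 0) \<and> (R2 \<le> t \<longrightarrow> cdf \<nu> t = 1)"
      using cs_bound[OF assms(2,6)] by blast
    define R where "R = max R1 R2"
    have bnd: "ennreal \<bar>dF t\<bar> \<le> indicator {-R..R} t" for t
    proof (cases "t \<in> {-R..R}")
      case True
      have "\<bar>dF t\<bar> \<le> 1" using M.cdf_nonneg[of t] N.cdf_nonneg[of t] M.cdf_bounded_prob[of t] N.cdf_bounded_prob[of t]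
        by (simp add: dFe abs_le_iff)
      then show ?thesis using True by (simp add: ennreal_leI)
    next
      case False
      then have "t < -R \<or> R < t" by auto
      then have "dF t = 0" using R1 R2 by (auto simp: dFe R_def)
      then show ?thesis by simp
    qed
    have "(\<integral>\<^sup>+ t. ennreal \<bar>dF t\<bar> \<partial>lborel) \<le> (\<integral>\<^sup>+ t. indicator {-R..R} t \<partial>lborel)"
      by (rule nn_integral_mono) (rule bnd)
    also have "\<dots> = emeasure lborel {-R..R}" by simp
    also have "\<dots> < \<infinity>" by (simp add: emeasure_lborel_Icc_eq)
    finally have fin: "(\<integral>\<^sup>+ t. ennreal \<bar>dF t\<bar> \<partial>lborel) \<noteq> \<infinity>" by simp
    let ?I = "(\<integral>\<^sup>+ t. ennreal \<bar>dF t\<bar> \<partial>lborel)"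
    let ?J = "(\<integral>\<^sup>+ t. ennreal (U t + D t - \<bar>dF t\<bar>) \<partial>lborel)"
    have "?I + ?J \<le> ?I + 0" using le c0 cost_split by simp
    then have "?J \<le> 0" using fin ennreal_add_left_cancel_le by blast
    then have J0: "?J = 0" by simp
    have mJ: "(\<lambda>t. ennreal (U t + D t - \<bar>dF t\<bar>)) \<in> borel_measurable lborel" by measurable
    have "AE t in lborel. ennreal (U t + D t - \<bar>dF t\<bar>) = 0"
      using nn_integral_0_iff_AE[OF mJ] J0 by simp
    then have aeUD: "AE t in lborel. U t = 0 \<or> D t = 0"
    proof (rule eventually_mono)
      fix t assume "ennreal (U t + D t - \<bar>dF t\<bar>) = 0"
      then have "U t + D t - \<bar>dF t\<bar> \<le> 0" by (simp add: ennreal_eq_0_iff)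
      then show "U t = 0 \<or> D t = 0" using U_nonneg[of t] D_nonneg[of t] by (auto simp: dF_eq abs_if split: if_splits)
    qed
    have ev: "U t = 0 \<or> D t = 0" for t by (rule everywhere[OF aeUD])
    have contF: "continuous_on UNIV dF"
    proof (rule continuous_at_imp_continuous_on, intro ballI)
      fix x :: real
      have a1: "measure \<mu> {x} = 0" using assms(3) by (simp add: atomless_def measure_def)
      have a2: "measure \<nu> {x} = 0" using assms(4) by (simp add: atomless_def measure_def)
      have "isCont (\<lambda>t. cdf \<mu> t - cdf \<nu> t) x"
        using M.isCont_cdf[of x] N.isCont_cdf[of x] a1 a2 by (intro isCont_diff) auto
      then show "isCont dF x" by (simp add: dFe[abs_def])
    qed
    have contF2: "continuous_on UNIV (\<lambda>t. - dF t)" using contF by (intro continuous_intros)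
    have atmu: "emeasure \<gamma> {p. fst p = t} = 0" for t
    proof -
      have "emeasure \<gamma> {p. fst p = t} = emeasure (distr \<gamma> borel fst) {t}"
        by (subst emeasure_distr) (auto simp: vimage_def)
      then show ?thesis using assms(3) by (simp add: mu_eq atomless_def)
    qed
    have atnu: "emeasure \<gamma> {p. snd p = t} = 0" for t
    proof -
      have "emeasure \<gamma> {p. snd p = t} = emeasure (distr \<gamma> borel snd) {t}"
        by (subst emeasure_distr) (auto simp: vimage_def)
      then show ?thesis using assms(4) by (simp add: nu_eq atomless_def)
    qed
    have z1: "emeasure \<gamma> {p. fst p \<le> t \<and> t < snd p} = 0" if "dF t \<le> 0" for t
      using ev[of t] that U_nonneg[of t] D_nonneg[of t] by (auto simp: U_em2 dF_eq)
    have z2: "emeasure \<gamma> {p. snd p \<le> t \<and> t < fst p} = 0" if "- dF t \<le> 0" for t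
      using ev[of t] that U_nonneg[of t] D_nonneg[of t] by (auto simp: D_em2 dF_eq)
    have P1: "AE p in \<gamma>. fst p < snd p \<longrightarrow> (\<forall>t\<in>{fst p..snd p}. dF t > 0)"
      by (rule pstep[OF _ _ contF z1 atnu]) measurable
    have P2: "AE p in \<gamma>. snd p < fst p \<longrightarrow> (\<forall>t\<in>{snd p..fst p}. - dF t > 0)"
      by (rule pstep[OF _ _ contF2 z2 atmu]) measurable
    show "AE p in \<gamma>. ?C p"
      using P1 P2
    proof eventually_elim
      case (elim p)
      show ?case using pw1[of "fst p" "snd p" "cdf \<mu>" "cdf \<nu>"] elim unfolding sets_eq dFe by blast
    qed
  next
    assume ae: "AE p in \<gamma>. ?C p"
    have ud: "U t = 0 \<or> D t = 0" for t
    proof (cases "dF t \<le> 0")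
      case True
      have "AE p in \<gamma>. \<not> (fst p \<le> t \<and> t < snd p)"
        using ae
      proof (rule eventually_mono)
        fix p assume "?C p"
        then have "fst p \<le> t \<and> t < snd p \<longrightarrow> cdf \<mu> t > cdf \<nu> t"
          using pw2(1)[of "fst p" "cdf \<mu>" "cdf \<nu>" "snd p" t] unfolding sets_eq by blast
        then show "\<not> (fst p \<le> t \<and> t < snd p)" using True by (auto simp: dFe)
      qed
      then have "emeasure \<gamma> {p. fst p \<le> t \<and> t < snd p} = 0"
        using AE_iff_measurable[OF s1, of "\<lambda>p. \<not> (fst p \<le> t \<and> t < snd p)"] by simp
      then show ?thesis using U_nonneg[of t] by (simp add: U_em2)
    next
      case False
      have "AE p in \<gamma>. \<not> (snd p \<le> t \<and> t < fst p)"
        using ae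
      proof (rule eventually_mono)
        fix p assume "?C p"
        then have "snd p \<le> t \<and> t < fst p \<longrightarrow> cdf \<mu> t < cdf \<nu> t"
          using pw2(2)[of "fst p" "cdf \<mu>" "cdf \<nu>" "snd p" t] unfolding sets_eq by blast
        then show "\<not> (snd p \<le> t \<and> t < fst p)" using False by (auto simp: dFe)
      qed
      then have "emeasure \<gamma> {p. snd p \<le> t \<and> t < fst p} = 0"
        using AE_iff_measurable[OF s2, of "\<lambda>p. \<not> (snd p \<le> t \<and> t < fst p)"] by simp
      then show ?thesis using D_nonneg[of t] by (simp add: D_em2)
    qed
    have c: "transport_cost \<gamma> = (\<integral>\<^sup>+ t. ennreal \<bar>dF t\<bar> \<partial>lborel)" by (rule cost_eq_if[OF ud])
    show "optimal_plan \<mu> \<nu> \<gamma>"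
      unfolding optimal_plan_def
    proof (intro conjI ballI)
      show "\<gamma> \<in> transport_plans \<mu> \<nu>" by (rule assms(7))
      fix \<gamma>' assume g': "\<gamma>' \<in> transport_plans \<mu> \<nu>"
      interpret P': plan \<mu> \<nu> \<gamma>' using assms(1,2) g' by unfold_locales
      have "(\<integral>\<^sup>+ t. ennreal \<bar>P'.dF t\<bar> \<partial>lborel) \<le> transport_cost \<gamma>'" by (rule P'.cost_ge)
      then show "transport_cost \<gamma> \<le> transport_cost \<gamma>'" unfolding c by (simp add: P'.dF_def dF_def)
    qed
  qed
qed

end
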